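(* Let $a,b,e\in\mathbb{R}$ with $b\ne0$, and let $\alpha_i(t)$ ($i=1,\dots,4$) be scalar continuous functions (not necessarily odd). (i) Suppose $b\alpha_1(t)+\alpha_3(t)$ is $2\pi/|b|$-periodic, $a(a+e)<0$, and $\int_0^{2\pi/b}(b\alpha_1(s)+\alpha_3(s))\,ds=0$. Then the solution $$x(t)=\sqrt{-a(a+e)}\sin\Big(bt+\int_0^t(b\alpha_1(s)+\alpha_3(s))ds\Big),\ y(t)=\sqrt{-a(a+e)}\cos\Big(bt+\int_0^t(b\alpha_1(s)+\alpha_3(s))ds\Big),\ z(t)=-a$$ of the system $$\begin{aligned}\dot x&=(ax+by+xz)(1+\alpha_1(t))+x(a+z)\alpha_2(t)+y\alpha_3(t),\\ \dot y&=(-bx+ay+yz)(1+\alpha_1(t))+y(a+z)\alpha_2(t)-x\alpha_3(t),\\ \dot z&=(ez-x^2-y^2-z^2)(1+\alpha_1(t)+\alpha_2(t))\end{aligned}$$ is $2\pi/|b|$-periodic (the period not necessarily minimal). (ii) Suppose $b\alpha_1(t)+\alpha_3(t)+a^4\alpha_4(t)$ is $2\pi/|b|$-periodic and $\int_0^{2\pi/b}(b\alpha_1(s)+\alpha_3(s)+a^4\alpha_4(s))\,ds=0$. Then the solution $$x(t)=a\sin\Big(bt+\int_0^t(b\alpha_1(s)+\alpha_3(s)+a^4\alpha_4(s))ds\Big),\ y(t)=a\cos\Big(bt+\int_0^t(b\alpha_1(s)+\alpha_3(s)+a^4\alpha_4(s))ds\Big),\ z(t)=-a$$ of the system $$\begin{aligned}\dot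 x&=(ax+by+xz)(1+\alpha_1(t))+x(a+z)\alpha_2(t)+y\alpha_3(t)-y(x^2+y^2)(4az+x^2+y^2+2z^2)\alpha_4(t),\\ \dot y&=(-bx+ay+yz)(1+\alpha_1(t))+y(a+z)\alpha_2(t)-x\alpha_3(t)+x(x^2+y^2)(4az+x^2+y^2+2z^2)\alpha_4(t),\\ \dot z&=-(2az+x^2+y^2+z^2)(1+\alpha_1(t)+\alpha_2(t))\end{aligned}$$ is $2\pi/|b|$-periodic (the period not necessarily minimal). *)

theory Defs
  imports "HOL-Analysis.Analysis"
begin

definition periodic_with :: "real \<Rightarrow> (real \<Rightarrow> 'a) \<Rightarrow> bool" where
  "periodic_with p f \<longleftrightarrow> (\<forall>t. f (t + p) = f t)"

end

theory Submission
  imports Defs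
begin

lemma FTC_UNIV:
  fixes g :: "real \<Rightarrow> real"
  assumes "continuous_on UNIV g"
  shows "((\<lambda>t. LBINT s=0..t. g s) has_real_derivative g x) (at x)"
proof -
  have "((\<lambda>t. LBINT s=ereal 0..t. g s) has_vector_derivative g x) (at x within {min 0 x - 1..max 0 x + 1})"
    by (rule interval_integral_FTC2) (auto intro: continuous_on_subset[OF assms])
  then have "((\<lambda>t. LBINT s=0..t. g s) has_vector_derivative g x) (at x within {min 0 x - 1..max 0 x + 1})"
    by (simp add: zero_ereal_def)
  moreover have "at x within {min 0 x - 1..max 0 x + 1} = at x"
    by (rule at_within_interior) auto
  ultimately show ?thesis by (simp add: has_real_derivative_iff_has_vector_derivative)
qed

lemma per_int:
  fixes g :: "real \<Rightarrow> real"
  assumes c: "continuous_on UNIV g" and per: "periodic_with p g"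
    and z: "(LBINT s=0..(q::real). g s) = 0" and q: "q = p \<or> q = - p"
  shows "(LBINT s=0..(t + p). g s) = (LBINT s=0..t. g s)"
proof -
  define G where "G = (\<lambda>t::real. LBINT s=0..t. g s)"
  have dG: "\<And>x. (G has_real_derivative g x) (at x)"
    unfolding G_def by (rule FTC_UNIV[OF c])
  have D: "\<forall>x. ((\<lambda>t. G (t + p) - G t) has_real_derivative 0) (at x)"
  proof
    fix x
    have d1: "((\<lambda>t. G (t + p)) has_real_derivative g (x + p)) (at x)"
      by (subst DERIV_shift[symmetric]) (rule dG)
    have gp: "g (x + p) = g x" using per unfolding periodic_with_def by blast
    have "((\<lambda>t. G (t + p) - G t) has_real_derivative (g (x + p) - g x)) (at x)"
      by (rule DERIV_diff[OF d1 dG])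
    then show "((\<lambda>t. G (t + p) - G t) has_real_derivative 0) (at x)"
      unfolding gp by simp
  qed
  have const: "\<And>u v. G (u + p) - G u = G (v + p) - G v"
  proof -
    fix u v
    have "(\<lambda>t. G (t + p) - G t) u = (\<lambda>t. G (t + p) - G t) v"
      by (rule DERIV_isconst_all[OF D])
    then show "G (u + p) - G u = G (v + p) - G v" by (simp only:)
  qed
  have G0: "G 0 = 0" unfolding G_def zero_ereal_def[symmetric] by (rule interval_integral_endpoints_same)
  have zG: "G q = 0" using z unfolding G_def .
  have "G (t + p) - G t = 0"
    using q
  proof
    assume "q = p"
    then show ?thesis using const[of t 0] zG G0 by simp
  next
    assume "q = - p"
    then show ?thesis using const[of t "-p"] zG G0 by simp
  qed
  then show ?thesis unfolding G_def by simp
qed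

lemma theta_facts:
  fixes g :: "real \<Rightarrow> real" and b :: real
  assumes hb: "b \<noteq> 0" and c: "continuous_on UNIV g"
    and per: "periodic_with (2 * pi / \<bar>b\<bar>) g"
    and z: "(LBINT s=0..(2 * pi / b). g s) = 0"
  shows "\<And>t. ((\<lambda>t. b * t + (LBINT s=0..t. g s)) has_real_derivative (b + g t)) (at t)"
    and "\<And>t. sin (b * (t + 2 * pi / \<bar>b\<bar>) + (LBINT s=0..(t + 2 * pi / \<bar>b\<bar>). g s))
             = sin (b * t + (LBINT s=0..t. g s))"
    and "\<And>t. cos (b * (t + 2 * pi / \<bar>b\<bar>) + (LBINT s=0..(t + 2 * pi / \<bar>b\<bar>). g s))
             = cos (b * t + (LBINT s=0..t. g s))"
proof -
  fix t
  show "((\<lambda>t. b * t + (LBINT s=0..t. g s)) has_real_derivative (b + g t)) (at t)"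
    by (rule DERIV_cong[OF DERIV_add[OF DERIV_cmult[OF DERIV_ident] FTC_UNIV[OF c]]]) simp
next
  have q: "2 * pi / b = 2 * pi / \<bar>b\<bar> \<or> 2 * pi / b = - (2 * pi / \<bar>b\<bar>)"
  proof (cases "b > 0")
    case True then show ?thesis by simp
  next
    case False then have "\<bar>b\<bar> = - b" by simp
    then show ?thesis by simp
  qed
  have I: "\<And>t. (LBINT s=0..(t + 2 * pi / \<bar>b\<bar>). g s) = (LBINT s=0..t. g s)"
    by (rule per_int[OF c per z q])
  have bp: "b * (2 * pi / \<bar>b\<bar>) = 2 * pi \<or> b * (2 * pi / \<bar>b\<bar>) = - (2 * pi)"
  proof (cases "b > 0")
    case True then show ?thesis by simp
  next
    case False then have "\<bar>b\<bar> = - b" by simp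
    then show ?thesis using hb by simp
  qed
  have e: "\<And>t. b * (t + 2 * pi / \<bar>b\<bar>) + (LBINT s=0..(t + 2 * pi / \<bar>b\<bar>). g s)
     = (b * t + (LBINT s=0..t. g s)) + b * (2 * pi / \<bar>b\<bar>)"
    unfolding I by (simp only: distrib_left add_ac)
  have sp: "sin (x + b * (2 * pi / \<bar>b\<bar>)) = sin x" and cp: "cos (x + b * (2 * pi / \<bar>b\<bar>)) = cos x" for x
    using bp by (auto simp: sin_add cos_add)
  fix t
  show "sin (b * (t + 2 * pi / \<bar>b\<bar>) + (LBINT s=0..(t + 2 * pi / \<bar>b\<bar>). g s))
             = sin (b * t + (LBINT s=0..t. g s))"
    unfolding e by (rule sp)
  show "cos (b * (t + 2 * pi / \<bar>b\<bar>) + (LBINT s=0..(t + 2 * pi / \<bar>b\<bar>). g s))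
             = cos (b * t + (LBINT s=0..t. g s))"
    unfolding e by (rule cp)
qed

lemma part1:
  fixes a b e :: real
    and \<alpha>1 \<alpha>2 \<alpha>3 \<alpha>4 :: "real \<Rightarrow> real"
  assumes hb: "b \<noteq> 0"
    and c1: "continuous_on UNIV \<alpha>1" and c2: "continuous_on UNIV \<alpha>2"
    and c3: "continuous_on UNIV \<alpha>3" and c4: "continuous_on UNIV \<alpha>4"
  shows "(periodic_with (2 * pi / \<bar>b\<bar>) (\<lambda>t. b * \<alpha>1 t + \<alpha>3 t)
      \<and> a * (a + e) < 0
      \<and> (LBINT s=0..(2 * pi / b). b * \<alpha>1 s + \<alpha>3 s) = 0)
    \<longrightarrow> (let \<theta> = (\<lambda>t. b * t + (LBINT s=0..t. b * \<alpha>1 s + \<alpha>3 s));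
          x = (\<lambda>t. sqrt (- a * (a + e)) * sin (\<theta> t));
          y = (\<lambda>t. sqrt (- a * (a + e)) * cos (\<theta> t));
          z = (\<lambda>t. - a)
      in (\<forall>t.
            (x has_real_derivative
               ((a * x t + b * y t + x t * z t) * (1 + \<alpha>1 t) + x t * (a + z t) * \<alpha>2 t
                 + y t * \<alpha>3 t)) (at t)
          \<and> (y has_real_derivative
               ((- b * x t + a * y t + y t * z t) * (1 + \<alpha>1 t) + y t * (a + z t) * \<alpha>2 t
                 - x t * \<alpha>3 t)) (at t)
          \<and> (z has_real_derivative
               ((e * z t - (x t)^2 - (y t)^2 - (z t)^2) * (1 + \<alpha>1 t + \<alpha>2 t))) (at t))
         \<and> periodic_with (2 * pi / \<bar>b\<bar>) x
         \<and> periodic_with (2 * pi / \<bar>b\<bar>) y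
         \<and> periodic_with (2 * pi / \<bar>b\<bar>) z)" (is "_ \<longrightarrow> ?L")
proof (rule impI)
  assume H: "periodic_with (2 * pi / \<bar>b\<bar>) (\<lambda>t. b * \<alpha>1 t + \<alpha>3 t)
      \<and> a * (a + e) < 0
      \<and> (LBINT s=0..(2 * pi / b). b * \<alpha>1 s + \<alpha>3 s) = 0"
  have cg: "continuous_on UNIV (\<lambda>t. b * \<alpha>1 t + \<alpha>3 t)"
    by (intro continuous_intros c1 c3)
  note T = theta_facts[OF hb cg, of, OF conjunct1[OF H] conjunct2[OF conjunct2[OF H]]]
  define r where "r = sqrt (- a * (a + e))"
  have neg: "a * (a + e) < 0" using H by blast
  have r2: "r^2 = - a * (a + e)" unfolding r_def by (rule real_sqrt_pow2) (use neg in linarith)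
  show ?L
    unfolding Let_def r_def[symmetric]
  proof (intro conjI allI)
    fix t
    let ?th = "b * t + (LBINT s=0..t. b * \<alpha>1 s + \<alpha>3 s)"
    show "((\<lambda>t. r * sin (b * t + (LBINT s=0..t. b * \<alpha>1 s + \<alpha>3 s))) has_real_derivative
       (a * (r * sin ?th) + b * (r * cos ?th) + r * sin ?th * - a) * (1 + \<alpha>1 t) +
       r * sin ?th * (a + - a) * \<alpha>2 t + r * cos ?th * \<alpha>3 t) (at t)"
      by (rule DERIV_cong[OF DERIV_cmult[OF DERIV_fun_sin[OF T(1)[of t]]]]) (simp add: algebra_simps)
    show "((\<lambda>t. r * cos (b * t + (LBINT s=0..t. b * \<alpha>1 s + \<alpha>3 s))) has_real_derivative
       (- b * (r * sin ?th) + a * (r * cos ?th) + r * cos ?th * - a) * (1 + \<alpha>1 t) +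
       r * cos ?th * (a + - a) * \<alpha>2 t - r * sin ?th * \<alpha>3 t) (at t)"
      by (rule DERIV_cong[OF DERIV_cmult[OF DERIV_fun_cos[OF T(1)[of t]]]]) (simp add: algebra_simps)
    have sc: "(sin ?th)\<^sup>2 + (cos ?th)\<^sup>2 = 1" by simp
    have K: "(r * sin ?th)\<^sup>2 + (r * cos ?th)\<^sup>2 = r^2"
      unfolding power_mult_distrib distrib_left[symmetric] sc by simp
    have "e * - a - (r * sin ?th)\<^sup>2 - (r * cos ?th)\<^sup>2 - (- a)\<^sup>2 = e * - a - ((r * sin ?th)\<^sup>2 + (r * cos ?th)\<^sup>2) - a^2"
      by (simp add: algebra_simps)
    also have "\<dots> = e * - a - r^2 - a^2" unfolding K ..
    also have "\<dots> = 0" using r2 by (simp add: algebra_simps power2_eq_square)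
    finally have z0: "e * - a - (r * sin ?th)\<^sup>2 - (r * cos ?th)\<^sup>2 - (- a)\<^sup>2 = 0" .
    show "((\<lambda>t. - a) has_real_derivative
       (e * - a - (r * sin ?th)\<^sup>2 - (r * cos ?th)\<^sup>2 - (- a)\<^sup>2) * (1 + \<alpha>1 t + \<alpha>2 t)) (at t)"
      unfolding z0 by simp
  next
    show "periodic_with (2 * pi / \<bar>b\<bar>) (\<lambda>t. r * sin (b * t + (LBINT s=0..t. b * \<alpha>1 s + \<alpha>3 s)))"
      unfolding periodic_with_def by (intro allI) (simp only: T(2))
  next
    show "periodic_with (2 * pi / \<bar>b\<bar>) (\<lambda>t. r * cos (b * t + (LBINT s=0..t. b * \<alpha>1 s + \<alpha>3 s)))"
      unfolding periodic_with_def by (intro allI) (simp only: T(3))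
  next
    show "periodic_with (2 * pi / \<bar>b\<bar>) (\<lambda>t::real. - a)"
      unfolding periodic_with_def by simp
  qed
qed

lemma part2:
  fixes a b e :: real
    and \<alpha>1 \<alpha>2 \<alpha>3 \<alpha>4 :: "real \<Rightarrow> real"
  assumes hb: "b \<noteq> 0"
    and c1: "continuous_on UNIV \<alpha>1" and c2: "continuous_on UNIV \<alpha>2"
    and c3: "continuous_on UNIV \<alpha>3" and c4: "continuous_on UNIV \<alpha>4"
  shows "(periodic_with (2 * pi / \<bar>b\<bar>) (\<lambda>t. b * \<alpha>1 t + \<alpha>3 t + a^4 * \<alpha>4 t)
      \<and> (LBINT s=0..(2 * pi / b). b * \<alpha>1 s + \<alpha>3 s + a^4 * \<alpha>4 s) = 0)
    \<longrightarrow> (let \<theta> = (\<lambda>t. b * t + (LBINT s=0..t. b * \<alpha>1 s + \<alpha>3 s + a^4 * \<alpha>4 s));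
          x = (\<lambda>t. a * sin (\<theta> t));
          y = (\<lambda>t. a * cos (\<theta> t));
          z = (\<lambda>t. - a)
      in (\<forall>t.
            (x has_real_derivative
               ((a * x t + b * y t + x t * z t) * (1 + \<alpha>1 t) + x t * (a + z t) * \<alpha>2 t
                 + y t * \<alpha>3 t
                 - y t * ((x t)^2 + (y t)^2) * (4 * a * z t + (x t)^2 + (y t)^2 + 2 * (z t)^2)
                   * \<alpha>4 t)) (at t)
          \<and> (y has_real_derivative
               ((- b * x t + a * y t + y t * z t) * (1 + \<alpha>1 t) + y t * (a + z t) * \<alpha>2 t
                 - x t * \<alpha>3 t
                 + x t * ((x t)^2 + (y t)^2) * (4 * a * z t + (x t)^2 + (y t)^2 + 2 * (z t)^2)
                   * \<alpha>4 t)) (at t)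
          \<and> (z has_real_derivative
               (- (2 * a * z t + (x t)^2 + (y t)^2 + (z t)^2) * (1 + \<alpha>1 t + \<alpha>2 t))) (at t))
         \<and> periodic_with (2 * pi / \<bar>b\<bar>) x
         \<and> periodic_with (2 * pi / \<bar>b\<bar>) y
         \<and> periodic_with (2 * pi / \<bar>b\<bar>) z)" (is "_ \<longrightarrow> ?L")
proof (rule impI)
  assume H: "periodic_with (2 * pi / \<bar>b\<bar>) (\<lambda>t. b * \<alpha>1 t + \<alpha>3 t + a^4 * \<alpha>4 t)
      \<and> (LBINT s=0..(2 * pi / b). b * \<alpha>1 s + \<alpha>3 s + a^4 * \<alpha>4 s) = 0"
  have cg: "continuous_on UNIV (\<lambda>t. b * \<alpha>1 t + \<alpha>3 t + a^4 * \<alpha>4 t)"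
    by (intro continuous_intros c1 c3 c4)
  note T = theta_facts[OF hb cg, of, OF conjunct1[OF H] conjunct2[OF H]]
  show ?L
    unfolding Let_def
  proof (intro conjI allI)
    fix t
    let ?th = "b * t + (LBINT s=0..t. b * \<alpha>1 s + \<alpha>3 s + a^4 * \<alpha>4 s)"
    have sc: "(sin ?th)\<^sup>2 + (cos ?th)\<^sup>2 = 1" by simp
    have K: "(a * sin ?th)\<^sup>2 + (a * cos ?th)\<^sup>2 = a^2"
      unfolding power_mult_distrib distrib_left[symmetric] sc by simp
    show "((\<lambda>t. a * sin (b * t + (LBINT s=0..t. b * \<alpha>1 s + \<alpha>3 s + a^4 * \<alpha>4 s))) has_real_derivative
       (a * (a * sin ?th) + b * (a * cos ?th) + a * sin ?th * - a) * (1 + \<alpha>1 t) +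
       a * sin ?th * (a + - a) * \<alpha>2 t + a * cos ?th * \<alpha>3 t -
       a * cos ?th * ((a * sin ?th)\<^sup>2 + (a * cos ?th)\<^sup>2) *
       (4 * a * - a + (a * sin ?th)\<^sup>2 + (a * cos ?th)\<^sup>2 + 2 * (- a)\<^sup>2) * \<alpha>4 t) (at t)"
      unfolding K add.assoc[of "4 * a * - a"] K
      by (rule DERIV_cong[OF DERIV_cmult[OF DERIV_fun_sin[OF T(1)[of t]]]]) (simp add: algebra_simps power2_eq_square power4_eq_xxxx)
    show "((\<lambda>t. a * cos (b * t + (LBINT s=0..t. b * \<alpha>1 s + \<alpha>3 s + a^4 * \<alpha>4 s))) has_real_derivative
       (- b * (a * sin ?th) + a * (a * cos ?th) + a * cos ?th * - a) * (1 + \<alpha>1 t) +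
       a * cos ?th * (a + - a) * \<alpha>2 t - a * sin ?th * \<alpha>3 t +
       a * sin ?th * ((a * sin ?th)\<^sup>2 + (a * cos ?th)\<^sup>2) *
       (4 * a * - a + (a * sin ?th)\<^sup>2 + (a * cos ?th)\<^sup>2 + 2 * (- a)\<^sup>2) * \<alpha>4 t) (at t)"
      unfolding K add.assoc[of "4 * a * - a"] K
      by (rule DERIV_cong[OF DERIV_cmult[OF DERIV_fun_cos[OF T(1)[of t]]]]) (simp add: algebra_simps power2_eq_square power4_eq_xxxx)
    have z0: "- (2 * a * - a + (a * sin ?th)\<^sup>2 + (a * cos ?th)\<^sup>2 + (- a)\<^sup>2) = 0"
      unfolding add.assoc[of "2 * a * - a"] K by (simp add: power2_eq_square)
    show "((\<lambda>t. - a) has_real_derivative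
       - (2 * a * - a + (a * sin ?th)\<^sup>2 + (a * cos ?th)\<^sup>2 + (- a)\<^sup>2) * (1 + \<alpha>1 t + \<alpha>2 t)) (at t)"
      unfolding z0 by simp
  next
    show "periodic_with (2 * pi / \<bar>b\<bar>) (\<lambda>t. a * sin (b * t + (LBINT s=0..t. b * \<alpha>1 s + \<alpha>3 s + a^4 * \<alpha>4 s)))"
      unfolding periodic_with_def by (intro allI) (simp only: T(2))
  next
    show "periodic_with (2 * pi / \<bar>b\<bar>) (\<lambda>t. a * cos (b * t + (LBINT s=0..t. b * \<alpha>1 s + \<alpha>3 s + a^4 * \<alpha>4 s)))"
      unfolding periodic_with_def by (intro allI) (simp only: T(3))
  next
    show "periodic_with (2 * pi / \<bar>b\<bar>) (\<lambda>t::real. - a)"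
      unfolding periodic_with_def by simp
  qed
qed

theorem theorem5:
  fixes a b e :: real
    and \<alpha>1 \<alpha>2 \<alpha>3 \<alpha>4 :: "real \<Rightarrow> real"
  assumes hb: "b \<noteq> 0"
    and c1: "continuous_on UNIV \<alpha>1" and c2: "continuous_on UNIV \<alpha>2"
    and c3: "continuous_on UNIV \<alpha>3" and c4: "continuous_on UNIV \<alpha>4"
  shows
   "(periodic_with (2 * pi / \<bar>b\<bar>) (\<lambda>t. b * \<alpha>1 t + \<alpha>3 t)
      \<and> a * (a + e) < 0
      \<and> (LBINT s=0..(2 * pi / b). b * \<alpha>1 s + \<alpha>3 s) = 0
    \<longrightarrow>
     (let \<theta> = (\<lambda>t. b * t + (LBINT s=0..t. b * \<alpha>1 s + \<alpha>3 s));
          x = (\<lambda>t. sqrt (- a * (a + e)) * sin (\<theta> t));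
          y = (\<lambda>t. sqrt (- a * (a + e)) * cos (\<theta> t));
          z = (\<lambda>t. - a)
      in (\<forall>t.
            (x has_real_derivative
               ((a * x t + b * y t + x t * z t) * (1 + \<alpha>1 t) + x t * (a + z t) * \<alpha>2 t
                 + y t * \<alpha>3 t)) (at t)
          \<and> (y has_real_derivative
               ((- b * x t + a * y t + y t * z t) * (1 + \<alpha>1 t) + y t * (a + z t) * \<alpha>2 t
                 - x t * \<alpha>3 t)) (at t)
          \<and> (z has_real_derivative
               ((e * z t - (x t)^2 - (y t)^2 - (z t)^2) * (1 + \<alpha>1 t + \<alpha>2 t))) (at t))
         \<and> periodic_with (2 * pi / \<bar>b\<bar>) x
         \<and> periodic_with (2 * pi / \<bar>b\<bar>) y
         \<and> periodic_with (2 * pi / \<bar>b\<bar>) z))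
   \<and>
   (periodic_with (2 * pi / \<bar>b\<bar>) (\<lambda>t. b * \<alpha>1 t + \<alpha>3 t + a^4 * \<alpha>4 t)
      \<and> (LBINT s=0..(2 * pi / b). b * \<alpha>1 s + \<alpha>3 s + a^4 * \<alpha>4 s) = 0
    \<longrightarrow>
     (let \<theta> = (\<lambda>t. b * t + (LBINT s=0..t. b * \<alpha>1 s + \<alpha>3 s + a^4 * \<alpha>4 s));
          x = (\<lambda>t. a * sin (\<theta> t));
          y = (\<lambda>t. a * cos (\<theta> t));
          z = (\<lambda>t. - a)
      in (\<forall>t.
            (x has_real_derivative
               ((a * x t + b * y t + x t * z t) * (1 + \<alpha>1 t) + x t * (a + z t) * \<alpha>2 t
                 + y t * \<alpha>3 t
                 - y t * ((x t)^2 + (y t)^2) * (4 * a * z t + (x t)^2 + (y t)^2 + 2 * (z t)^2)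
                   * \<alpha>4 t)) (at t)
          \<and> (y has_real_derivative
               ((- b * x t + a * y t + y t * z t) * (1 + \<alpha>1 t) + y t * (a + z t) * \<alpha>2 t
                 - x t * \<alpha>3 t
                 + x t * ((x t)^2 + (y t)^2) * (4 * a * z t + (x t)^2 + (y t)^2 + 2 * (z t)^2)
                   * \<alpha>4 t)) (at t)
          \<and> (z has_real_derivative
               (- (2 * a * z t + (x t)^2 + (y t)^2 + (z t)^2) * (1 + \<alpha>1 t + \<alpha>2 t))) (at t))
         \<and> periodic_with (2 * pi / \<bar>b\<bar>) x
         \<and> periodic_with (2 * pi / \<bar>b\<bar>) y
         \<and> periodic_with (2 * pi / \<bar>b\<bar>) z))"
  by (rule conjI[OF part1[OF assms] part2[OF assms]])

end
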